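(* Let $p$ be a prime and $r\in\mathbb{Z}$. Let $j\in\{0,1,\dots,p-1\}$ be the residue of $-r$ modulo $p$ and $K=\sum_{k=1}^{j}p^k$. Then for all integers $n\geq K$, \[ B_{n,r}\equiv B_{n-K}\pmod p. \]
   Context: $B_n$ is the $n$-th Bell number. For any integer $s$, the $s$-Bell numbers are defined by $\sum_{n\geq0}B_{n,s}\frac{t^n}{n!}=e^{e^t-1+st}$. *)

theory Defs
  imports "HOL-Computational_Algebra.Formal_Power_Series"
begin

definition sbell :: "nat \<Rightarrow> int \<Rightarrow> rat" where
  "sbell n s = fact n * fps_nth (fps_exp 1 oo (fps_exp 1 - 1 + fps_const (of_int s) * fps_X)) n"

definition bell :: "nat \<Rightarrow> rat" where
  "bell n = sbell n 0"

end

theory Submission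
  imports Defs "HOL-Computational_Algebra.Polynomial" "HOL-Computational_Algebra.Primes"
begin
unbundle fps_syntax

definition FF :: "int \<Rightarrow> rat fps" where
  "FF s = fps_exp 1 oo (fps_exp 1 - 1 + fps_const (of_int s) * fps_X)"

lemma FF_deriv: "fps_deriv (FF s) = FF s * (fps_exp 1 + fps_const (of_int s))"
  unfolding FF_def
  by (subst fps_compose_deriv) (simp_all add: algebra_simps)

lemma fact_choose: "k \<le> n \<Longrightarrow> (fact n :: rat) = of_nat (n choose k) * fact k * fact (n - k)"
proof -
  assume "k \<le> n"
  from binomial_fact_lemma[OF this] have "(fact n :: rat) = of_nat (fact k * fact (n - k) * (n choose k))"
    by (metis of_nat_fact)
  then show ?thesis by (simp add: algebra_simps)
qed

lemma FF_0: "FF s $ 0 = 1"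
  unfolding FF_def by simp

lemma ode_unique:
  fixes F G H :: "rat fps"
  assumes "fps_deriv F = F * H" "fps_deriv G = G * H" "F $ 0 = G $ 0"
  shows "F = G"
proof -
  have "F $ n = G $ n" for n
  proof (induction n rule: less_induct)
    case (less n)
    show ?case
    proof (cases n)
      case 0 then show ?thesis using assms by simp
    next
      case (Suc m)
      have "(F * H) $ m = (G * H) $ m"
        unfolding fps_mult_nth using less Suc by (intro sum.cong) auto
      then have "fps_deriv F $ m = fps_deriv G $ m" using assms by simp
      then have "of_nat (m+1) * F $ (m+1) = of_nat (m+1) * G $ (m+1)" by simp
      then show ?thesis using Suc by (simp del: of_nat_Suc)
    qed
  qed
  then show ?thesis by (simp add: fps_eq_iff)
qed

lemma FF_prod: "FF s = FF 0 * fps_exp (of_int s)"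
proof (rule ode_unique[OF FF_deriv])
  show "fps_deriv (FF 0 * fps_exp (of_int s)) = FF 0 * fps_exp (of_int s) * (fps_exp 1 + fps_const (of_int s))"
    using FF_deriv[of 0] by (simp add: algebra_simps)
  show "FF s $ 0 = (FF 0 * fps_exp (of_int s)) $ 0" by (simp add: FF_0)
qed

lemma bell_FF: "bell n = fact n * FF 0 $ n"
  unfolding bell_def sbell_def FF_def by simp

lemma sbell_sum: "sbell n s = (\<Sum>k\<le>n. of_nat (n choose k) * of_int s ^ (n - k) * bell k)"
proof -
  have "sbell n s = fact n * FF s $ n" unfolding sbell_def FF_def by simp
  also have "\<dots> = fact n * (\<Sum>k=0..n. FF 0 $ k * (of_int s ^ (n-k) / fact (n-k)))"
    by (subst FF_prod) (simp add: fps_mult_nth)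
  also have "\<dots> = (\<Sum>k\<le>n. of_nat (n choose k) * of_int s ^ (n - k) * bell k)"
    unfolding sum_distrib_left atLeast0AtMost bell_FF
  proof (intro sum.cong refl)
    fix k assume "k \<in> {..n}"
    then have "k \<le> n" by simp
    then have "(fact n :: rat) = of_nat (n choose k) * fact k * fact (n - k)"
      by (rule fact_choose)
    then show "fact n * (FF 0 $ k * (of_int s ^ (n - k) / fact (n - k))) =
        of_nat (n choose k) * of_int s ^ (n - k) * (fact k * FF 0 $ k)"
      by (simp add: field_simps)
  qed
  finally show ?thesis .
qed

lemma bell_rec: "bell (Suc n) = (\<Sum>k\<le>n. of_nat (n choose k) * bell k)"
proof -
  have "fps_deriv (FF 0) $ n = (FF 0 * fps_exp 1) $ n" using FF_deriv[of 0] by simp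
  then have "of_nat (Suc n) * FF 0 $ Suc n = (\<Sum>k=0..n. FF 0 $ k / fact (n-k))"
    by (simp add: fps_mult_nth)
  then have "fact n * (of_nat (Suc n) * FF 0 $ Suc n) = fact n * (\<Sum>k=0..n. FF 0 $ k / fact (n-k))"
    by simp
  also have "\<dots> = (\<Sum>k\<le>n. of_nat (n choose k) * bell k)"
    unfolding sum_distrib_left atLeast0AtMost bell_FF
  proof (intro sum.cong refl)
    fix k assume "k \<in> {..n}"
    then have "k \<le> n" by simp
    then have "(fact n :: rat) = of_nat (n choose k) * fact k * fact (n - k)"
      by (rule fact_choose)
    then show "fact n * (FF 0 $ k / fact (n - k)) = of_nat (n choose k) * (fact k * FF 0 $ k)"
      by (simp add: field_simps)
  qed
  finally show ?thesis by (simp add: bell_FF algebra_simps)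
qed

lemma bell_0: "bell 0 = 1" by (simp add: bell_FF FF_0)

lemma bell_Ints: "bell n \<in> \<int>"
proof (induction n rule: less_induct)
  case (less n)
  show ?case
  proof (cases n)
    case 0 then show ?thesis by (simp add: bell_0)
  next
    case (Suc m)
    then show ?thesis unfolding Suc bell_rec using less Suc
      by (intro Ints_sum Ints_mult) auto
  qed
qed


definition LL :: "int poly \<Rightarrow> rat" where
  "LL f = (\<Sum>k\<le>degree f. of_int (coeff f k) * bell k)"

lemma LL_bound: "degree f \<le> N \<Longrightarrow> LL f = (\<Sum>k\<le>N. of_int (coeff f k) * bell k)"
  unfolding LL_def
  by (rule sum.mono_neutral_left) (auto simp: coeff_eq_0)

lemma LL_0 [simp]: "LL 0 = 0" by (simp add: LL_def)

lemma LL_add: "LL (f + g) = LL f + LL g"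
proof -
  define N where "N = max (degree f) (degree g)"
  have "degree (f + g) \<le> N" unfolding N_def by (rule degree_add_le) auto
  then show ?thesis
    using LL_bound[of f N] LL_bound[of g N] LL_bound[of "f+g" N]
    by (simp add: N_def sum.distrib algebra_simps)
qed

lemma LL_smult: "LL (smult c f) = of_int c * LL f"
proof -
  have "degree (smult c f) \<le> degree f" by (rule degree_smult_le)
  then show ?thesis using LL_bound[of "smult c f" "degree f"]
    by (simp add: LL_def sum_distrib_left algebra_simps)
qed

lemma LL_minus: "LL (- f) = - LL f"
  using LL_smult[of "-1" f] by simp

lemma LL_diff: "LL (f - g) = LL f - LL g"
  using LL_add[of f "-g"] LL_minus[of g] by simp

lemma LL_sum: "LL (\<Sum>i\<in>A. h i) = (\<Sum>i\<in>A. LL (h i))"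
  by (induction A rule: infinite_finite_induct) (auto simp: LL_add)

lemma LL_monom: "LL (monom c n) = of_int c * bell n"
proof -
  have "LL (monom c n) = (\<Sum>k\<le>n. of_int (coeff (monom c n) k) * bell k)"
    by (rule LL_bound) (simp add: degree_monom_le)
  also have "\<dots> = (\<Sum>k\<le>n. if k = n then of_int c * bell k else 0)"
    by (intro sum.cong) auto
  finally show ?thesis by simp
qed

lemma LL_Ints: "LL f \<in> \<int>"
  unfolding LL_def using bell_Ints by (intro Ints_sum Ints_mult) auto

lemma poly_monoms: "(f::int poly) = (\<Sum>k\<le>degree f. smult (coeff f k) (monom 1 k))"
  using poly_as_sum_of_monoms[of f] by (simp add: smult_monom)

lemma pcompose_monom1: "pcompose (monom 1 k) q = q ^ k"
  by (induction k) (simp_all add: monom_0 monom_Suc pcompose_pCons pcompose_1)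

lemma LL_lin_power: "LL ([:c, 1:] ^ n) = (\<Sum>k\<le>n. of_nat (n choose k) * of_int c ^ (n - k) * bell k)"
proof -
  have "[:c, 1:] ^ n = (monom 1 1 + [:c:]) ^ n"
    by (simp add: monom_Suc monom_0)
  also have "\<dots> = (\<Sum>k\<le>n. of_nat (n choose k) * monom 1 1 ^ k * [:c:] ^ (n - k))"
    by (rule binomial_ring)
  also have "\<dots> = (\<Sum>k\<le>n. monom (int (n choose k) * c ^ (n - k)) k)"
    by (intro sum.cong refl) (simp add: monom_power of_nat_poly poly_const_pow smult_monom mult.commute)
  finally show ?thesis by (simp add: LL_sum LL_monom)
qed

lemma LL_X_mult: "LL (monom 1 1 * f) = LL (pcompose f [:1, 1:])"
proof -
  have "LL (monom 1 1 * f) = LL (\<Sum>k\<le>degree f. smult (coeff f k) (monom 1 (Suc k)))"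
    by (subst poly_monoms) (simp add: sum_distrib_left mult_monom)
  also have "\<dots> = (\<Sum>k\<le>degree f. of_int (coeff f k) * bell (Suc k))"
    by (simp add: LL_sum LL_smult LL_monom)
  also have "\<dots> = (\<Sum>k\<le>degree f. of_int (coeff f k) * LL ([:1,1:] ^ k))"
    by (simp add: LL_lin_power bell_rec)
  also have "\<dots> = LL (pcompose f [:1, 1:])"
    by (subst (2) poly_monoms) (simp add: pcompose_sum pcompose_smult pcompose_monom1 LL_sum LL_smult)
  finally show ?thesis .
qed

definition ff :: "nat \<Rightarrow> int poly" where
  "ff j = (\<Prod>i<j. [:- int i, 1:])"

lemma LL_ff: "LL (ff j * f) = LL (pcompose f [:int j, 1:])"
proof (induction j arbitrary: f)
  case 0
  then show ?case by (simp add: ff_def)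
next
  case (Suc j)
  have "LL (ff (Suc j) * f) = LL (ff j * ([:- int j, 1:] * f))"
    by (simp add: ff_def algebra_simps)
  also have "\<dots> = LL (pcompose ([:- int j, 1:] * f) [:int j, 1:])" by (rule Suc.IH)
  also have "\<dots> = LL (monom 1 1 * pcompose f [:int j, 1:])"
  proof -
    have "pcompose [:- int j, 1:] [:int j, 1:] = monom 1 1"
      by (simp add: pcompose_pCons monom_Suc monom_0)
    then show ?thesis by (simp only: pcompose_mult)
  qed
  also have "\<dots> = LL (pcompose (pcompose f [:int j, 1:]) [:1, 1:])" by (rule LL_X_mult)
  also have "\<dots> = LL (pcompose f [:int (Suc j), 1:])"
    by (simp add: pcompose_assoc[symmetric] pcompose_pCons add.commute)
  finally show ?case .
qed

lemma ff_monic: "degree (ff j) = j \<and> coeff (ff j) j = 1"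
proof (induction j)
  case 0 then show ?case by (simp add: ff_def)
next
  case (Suc j)
  have e: "ff (Suc j) = ff j * [:- int j, 1:]" by (simp add: ff_def)
  have nz: "ff j \<noteq> 0" using Suc by auto
  have d: "degree (ff (Suc j)) = Suc j" unfolding e using Suc nz by (subst degree_mult_eq) auto
  have "coeff (ff (Suc j)) (Suc j) = coeff (ff j) (degree (ff j)) * coeff [:- int j, 1:] (degree [:- int j, 1:])"
    using coeff_mult_degree_sum[of "ff j" "[:- int j, 1:]"] Suc by (simp add: e)
  then show ?case using d Suc by simp
qed


definition pc :: "nat \<Rightarrow> int poly \<Rightarrow> int poly \<Rightarrow> bool" where
  "pc p f g \<longleftrightarrow> (\<exists>q. f - g = smult (int p) q)"

definition rc :: "nat \<Rightarrow> rat \<Rightarrow> rat \<Rightarrow> bool" where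
  "rc p a b \<longleftrightarrow> (\<exists>m::int. a - b = of_int (int p * m))"

definition KE :: "nat \<Rightarrow> int poly \<Rightarrow> int poly \<Rightarrow> bool" where
  "KE p f g \<longleftrightarrow> (\<forall>h. rc p (LL (f * h)) (LL (g * h)))"

lemma pc_refl: "pc p f f" unfolding pc_def by (rule exI[of _ 0]) simp

lemma pc_sym: "pc p f g \<Longrightarrow> pc p g f"
  unfolding pc_def by (metis minus_diff_eq smult_minus_right)

lemma pc_trans: "pc p f g \<Longrightarrow> pc p g h \<Longrightarrow> pc p f h"
  unfolding pc_def by (metis diff_add_cancel add_diff_eq smult_add_right)

lemma pc_add: "pc p f1 g1 \<Longrightarrow> pc p f2 g2 \<Longrightarrow> pc p (f1 + f2) (g1 + g2)"
  unfolding pc_def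
proof (elim exE)
  fix q1 q2 assume "f1 - g1 = smult (int p) q1" "f2 - g2 = smult (int p) q2"
  then have "f1 + f2 - (g1 + g2) = smult (int p) (q1 + q2)" by (simp add: algebra_simps smult_add_right)
  then show "\<exists>q. f1 + f2 - (g1 + g2) = smult (int p) q" by blast
qed

lemma pc_mult: "pc p f1 g1 \<Longrightarrow> pc p f2 g2 \<Longrightarrow> pc p (f1 * f2) (g1 * g2)"
  unfolding pc_def
proof (elim exE)
  fix q1 q2 assume "f1 - g1 = smult (int p) q1" "f2 - g2 = smult (int p) q2"
  then have "f1 = g1 + smult (int p) q1" "f2 = g2 + smult (int p) q2" by (simp_all add: algebra_simps)
  then have "f1 * f2 - g1 * g2 = smult (int p) (q1 * g2 + g1 * q2 + smult (int p) (q1 * q2))"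
    by (simp add: algebra_simps smult_add_right)
  then show "\<exists>q. f1 * f2 - g1 * g2 = smult (int p) q" by blast
qed

lemma pc_power: "pc p f g \<Longrightarrow> pc p (f ^ n) (g ^ n)"
  by (induction n) (simp_all add: pc_refl pc_mult)

lemma pc_prod: "(\<And>i. i \<in> A \<Longrightarrow> pc p (f i) (g i)) \<Longrightarrow> pc p (\<Prod>i\<in>A. f i) (\<Prod>i\<in>A. g i)"
  by (induction A rule: infinite_finite_induct) (simp_all add: pc_refl pc_mult)

lemma pc_pcompose: "pc p q1 q2 \<Longrightarrow> pc p (pcompose f q1) (pcompose f q2)"
proof (induction f)
  case 0 then show ?case by (simp add: pc_refl)
next
  case (pCons a f)
  then show ?case by (simp add: pcompose_pCons pc_add pc_mult pc_refl)
qed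

lemma pc_const: "int p dvd (a - b) \<Longrightarrow> pc p [:a:] [:b:]"
  unfolding pc_def
proof -
  assume "int p dvd (a - b)"
  then obtain m where "a - b = int p * m" by (auto elim: dvdE)
  then have "[:a:] - [:b:] = smult (int p) [:m:]" by simp
  then show "\<exists>q. [:a:] - [:b:] = smult (int p) q" by blast
qed

lemma rc_refl: "rc p a a" unfolding rc_def by (rule exI[of _ 0]) simp

lemma rc_sym: "rc p a b \<Longrightarrow> rc p b a"
  unfolding rc_def by (metis minus_diff_eq mult_minus_right of_int_minus)

lemma rc_trans: "rc p a b \<Longrightarrow> rc p b c \<Longrightarrow> rc p a c"
  unfolding rc_def
proof (elim exE)
  fix m1 m2 assume "a - b = of_int (int p * m1)" "b - c = of_int (int p * m2)"
  then have "a - c = of_int (int p * (m1 + m2))" by (simp add: algebra_simps)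
  then show "\<exists>m. a - c = of_int (int p * m)" by blast
qed

lemma rc_add: "rc p a1 b1 \<Longrightarrow> rc p a2 b2 \<Longrightarrow> rc p (a1 + a2) (b1 + b2)"
  unfolding rc_def
proof (elim exE)
  fix m1 m2 assume "a1 - b1 = of_int (int p * m1)" "a2 - b2 = of_int (int p * m2)"
  then have "a1 + a2 - (b1 + b2) = of_int (int p * (m1 + m2))" by (simp add: algebra_simps)
  then show "\<exists>m. a1 + a2 - (b1 + b2) = of_int (int p * m)" by blast
qed

lemma pc_LL: "pc p f g \<Longrightarrow> rc p (LL f) (LL g)"
  unfolding pc_def rc_def
proof (elim exE)
  fix q assume "f - g = smult (int p) q"
  then have "LL f - LL g = of_int (int p) * LL q" by (metis LL_diff LL_smult)
  moreover obtain m where "LL q = of_int m" using LL_Ints[of q] by (auto elim: Ints_cases)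
  ultimately have "LL f - LL g = of_int (int p * m)" by simp
  then show "\<exists>m. LL f - LL g = of_int (int p * m)" by blast
qed

lemma KE_of_pc: "pc p f g \<Longrightarrow> KE p f g"
  unfolding KE_def by (auto intro: pc_LL pc_mult pc_refl)

lemma KE_refl: "KE p f f" by (simp add: KE_of_pc pc_refl)

lemma KE_sym: "KE p f g \<Longrightarrow> KE p g f" unfolding KE_def by (auto intro: rc_sym)

lemma KE_trans: "KE p f g \<Longrightarrow> KE p g h \<Longrightarrow> KE p f h" unfolding KE_def by (blast intro: rc_trans)

lemma KE_mult_right: "KE p f g \<Longrightarrow> KE p (f * k) (g * k)"
  unfolding KE_def by (metis mult.assoc)

lemma KE_mult: "KE p f1 g1 \<Longrightarrow> KE p f2 g2 \<Longrightarrow> KE p (f1 * f2) (g1 * g2)"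
proof -
  assume a: "KE p f1 g1" "KE p f2 g2"
  have "KE p (f1 * f2) (g1 * f2)" using a(1) by (rule KE_mult_right)
  moreover have "KE p (f2 * g1) (g2 * g1)" using a(2) by (rule KE_mult_right)
  then have "KE p (g1 * f2) (g1 * g2)" by (simp add: mult.commute)
  ultimately show ?thesis by (rule KE_trans)
qed

lemma KE_add: "KE p f1 g1 \<Longrightarrow> KE p f2 g2 \<Longrightarrow> KE p (f1 + f2) (g1 + g2)"
  unfolding KE_def by (simp add: distrib_right LL_add rc_add)

lemma KE_power: "KE p f g \<Longrightarrow> KE p (f ^ n) (g ^ n)"
  by (induction n) (simp_all add: KE_refl KE_mult)

lemma KE_prod: "(\<And>i. i \<in> A \<Longrightarrow> KE p (f i) (g i)) \<Longrightarrow> KE p (\<Prod>i\<in>A. f i) (\<Prod>i\<in>A. g i)"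
  by (induction A rule: infinite_finite_induct) (simp_all add: KE_refl KE_mult)


lemma of_nat_mult_poly: "(of_nat (p * m) :: int poly) * x = smult (int p) (of_nat m * x)"
  by (simp add: of_nat_mult_conv_smult)

lemma smult_sum_right: "smult c (\<Sum>i\<in>A. f i) = (\<Sum>i\<in>A. smult c (f i))"
  by (induction A rule: infinite_finite_induct) (simp_all add: smult_add_right)

lemma frob:
  assumes "prime p"
  shows "pc p ((f + g) ^ p) (f ^ p + g ^ p)"
proof -
  define T where "T k = of_nat (p choose k) * f ^ k * g ^ (p - k)" for k
  have p1: "p > 1" using assms prime_gt_1_nat by blast
  have "(f + g) ^ p = (\<Sum>k\<le>p. T k)" unfolding T_def by (rule binomial_ring)
  also have "{..p} = insert 0 (insert p {1..<p})" using p1 by auto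
  also have "(\<Sum>k\<in>insert 0 (insert p {1..<p}). T k) = T 0 + T p + (\<Sum>k\<in>{1..<p}. T k)"
    using p1 by (simp add: sum.insert)
  also have "T 0 + T p = f ^ p + g ^ p" by (simp add: T_def)
  also have "(\<Sum>k\<in>{1..<p}. T k) = smult (int p) (\<Sum>k\<in>{1..<p}. of_nat ((p choose k) div p) * f ^ k * g ^ (p - k))"
    unfolding smult_sum_right
  proof (intro sum.cong refl)
    fix k assume k: "k \<in> {1..<p}"
    have "p dvd (p choose k)" using k p1 assms by (intro dvd_choose_prime) auto
    then have "p choose k = p * ((p choose k) div p)" by simp
    then have "T k = of_nat (p * ((p choose k) div p)) * (f ^ k * g ^ (p - k))"
      unfolding T_def by (metis mult.assoc)
    then show "T k = smult (int p) (of_nat ((p choose k) div p) * f ^ k * g ^ (p - k))"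
      by (simp only: of_nat_mult_poly mult.assoc)
  qed
  finally show ?thesis unfolding pc_def by (intro exI) (simp add: algebra_simps)
qed

lemma frob_iter:
  assumes "prime p"
  shows "pc p ((f + g) ^ (p ^ k)) (f ^ (p ^ k) + g ^ (p ^ k))"
proof (induction k)
  case 0 then show ?case by (simp add: pc_refl)
next
  case (Suc k)
  have e: "\<And>h::int poly. h ^ (p ^ Suc k) = (h ^ (p ^ k)) ^ p"
    by (simp add: power_mult[symmetric] mult.commute)
  have "pc p (((f + g) ^ (p ^ k)) ^ p) ((f ^ (p ^ k) + g ^ (p ^ k)) ^ p)"
    using Suc by (rule pc_power)
  moreover have "pc p ((f ^ (p ^ k) + g ^ (p ^ k)) ^ p) ((f ^ (p ^ k)) ^ p + (g ^ (p ^ k)) ^ p)"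
    using assms by (rule frob)
  ultimately show ?case unfolding e by (rule pc_trans)
qed

lemma pc_const_dvd: "pc p [:a:] [:b:] \<Longrightarrow> int p dvd (a - b)"
  unfolding pc_def
proof (elim exE)
  fix q assume "[:a:] - [:b:] = smult (int p) q"
  then have "coeff ([:a:] - [:b:]) 0 = coeff (smult (int p) q) 0" by simp
  then have "a - b = int p * coeff q 0" by simp
  then show "int p dvd (a - b)" by simp
qed

lemma fermat_int:
  assumes "prime p"
  shows "int p dvd (c ^ p - c)"
proof -
  have step: "int p dvd ((x + 1) ^ p - x ^ p - 1)" for x :: int
  proof -
    have "pc p (([:x:] + [:1:]) ^ p) ([:x:] ^ p + [:1:] ^ p)" using assms by (rule frob)
    then have "pc p [:(x + 1) ^ p:] [:x ^ p + 1:]" by (simp add: poly_const_pow)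
    then show ?thesis using pc_const_dvd by (simp add: algebra_simps)
  qed
  have eq: "(x + 1) ^ p - (x + 1) = (x ^ p - x) + ((x + 1) ^ p - x ^ p - 1)" for x :: int
    by simp
  show ?thesis
  proof (induction c rule: int_induct[where k = 0])
    case base
    then show ?case using assms by (simp add: prime_gt_0_nat zero_power)
  next
    case (step1 i)
    then show ?case using step[of i] eq[of i] by (metis dvd_add)
  next
    case (step2 i)
    then show ?case using step[of "i - 1"] eq[of "i - 1"] by (metis diff_add_cancel dvd_diff add_diff_cancel_right')
  qed
qed

lemma fermat_iter:
  assumes "prime p"
  shows "int p dvd (c ^ (p ^ k) - c)"
proof (induction k)
  case 0 then show ?case by simp
next
  case (Suc k)
  have e: "c ^ (p ^ Suc k) = (c ^ (p ^ k)) ^ p"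
    by (simp add: power_mult[symmetric] mult.commute)
  have "c ^ (p ^ Suc k) - c = ((c ^ (p ^ k)) ^ p - c ^ (p ^ k)) + (c ^ (p ^ k) - c)"
    unfolding e by simp
  then show ?case using Suc fermat_int[OF assms, of "c ^ (p ^ k)"] by (metis dvd_add)
qed


lemma vanish:
  assumes "prime p"
  shows "degree g < n \<Longrightarrow> n \<le> p \<Longrightarrow> (\<forall>a<n. int p dvd poly g (int a)) \<Longrightarrow> pc p g 0"
proof (induction n arbitrary: g)
  case 0 then show ?case by simp
next
  case (Suc n)
  show ?case
  proof (cases "degree g = 0")
    case True
    then have g: "g = [:poly g 0:]" by (metis degree_0_id poly_0_coeff_0)
    have "int p dvd poly g 0" using Suc.prems(3) by (metis of_nat_0 zero_less_Suc)
    then obtain m where "poly g 0 = int p * m" by (auto elim: dvdE)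
    then have "g - 0 = smult (int p) [:m:]" by (subst g) simp
    then show ?thesis unfolding pc_def by blast
  next
    case False
    define h where "h = synthetic_div g (int n)"
    have gh: "g = [:- int n, 1:] * h + [:poly g (int n):]"
      unfolding h_def by (rule synthetic_div_correct'[symmetric])
    have dh: "degree h < n" using False Suc.prems(1) unfolding h_def by (simp add: degree_synthetic_div)
    have pr: "prime (int p)" using assms by simp
    have "\<forall>a<n. int p dvd poly h (int a)"
    proof (intro allI impI)
      fix a assume a: "a < n"
      have d1: "int p dvd poly g (int a)" using Suc.prems(3) a by simp
      have d2: "int p dvd poly g (int n)" using Suc.prems(3) by simp
      have "poly g (int a) = (int a - int n) * poly h (int a) + poly g (int n)"
        by (subst gh) (simp add: algebra_simps)
      then have "int p dvd (int a - int n) * poly h (int a)" using d1 d2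
        by (metis add_diff_cancel_right' dvd_diff)
      moreover have "\<not> int p dvd (int a - int n)"
      proof
        assume "int p dvd (int a - int n)"
        then have "int p dvd (int n - int a)" by (metis dvd_minus_iff minus_diff_eq)
        then have "int p \<le> int n - int a" using a by (intro zdvd_imp_le) auto
        then show False using Suc.prems(2) a by linarith
      qed
      ultimately show "int p dvd poly h (int a)" using pr by (metis prime_dvd_mult_iff)
    qed
    then have "pc p h 0" using Suc.IH[OF dh] Suc.prems(2) by simp
    then obtain q where q: "h = smult (int p) q" unfolding pc_def by auto
    have "int p dvd poly g (int n)" using Suc.prems(3) by simp
    then obtain m where m: "poly g (int n) = int p * m" by (auto elim: dvdE)
    have "g - 0 = smult (int p) ([:- int n, 1:] * q + [:m:])"
      by (subst gh) (simp add: q m smult_add_right)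
    then show ?thesis unfolding pc_def by blast
  qed
qed

lemma touchard_poly:
  assumes "prime p"
  shows "pc p (ff p) (monom 1 p - monom 1 1)"
proof -
  have p1: "p > 1" using assms prime_gt_1_nat by blast
  define g where "g = ff p - (monom 1 p - monom 1 1)"
  have ffm: "degree (ff p) = p" "coeff (ff p) p = 1" using ff_monic[of p] by auto
  have "degree g \<le> p - 1"
  proof (rule degree_le, intro allI impI)
    fix i assume "p - 1 < i"
    then have i: "i \<ge> p" "i \<noteq> 1" using p1 by auto
    show "coeff g i = 0"
    proof (cases "i = p")
      case True then show ?thesis using ffm i by (simp add: g_def)
    next
      case False
      then have "coeff (ff p) i = 0" using ffm i by (intro coeff_eq_0) auto
      then show ?thesis using False i by (simp add: g_def)
    qed
  qed
  then have dg: "degree g < p" using p1 by linarith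
  have "\<forall>a<p. int p dvd poly g (int a)"
  proof (intro allI impI)
    fix a assume a: "a < p"
    have "poly (ff p) (int a) = (\<Prod>i<p. int a - int i)" by (simp add: ff_def poly_prod)
    also have "\<dots> = 0" using a by (intro prod_zero) auto
    finally have "poly g (int a) = - (int a ^ p - int a)" by (simp add: g_def poly_monom)
    then show "int p dvd poly g (int a)" using fermat_int[OF assms, of "int a"] by (metis dvd_minus_iff minus_diff_eq)
  qed
  then have "pc p g 0" using vanish[OF assms dg] by simp
  then show ?thesis unfolding pc_def g_def by simp
qed

lemma touchard:
  assumes "prime p"
  shows "KE p (monom 1 p) [:1, 1:]"
  unfolding KE_def
proof
  fix h
  have pc1: "pc p (monom 1 p) (ff p + monom 1 1)"
    using touchard_poly[OF assms] unfolding pc_def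
    by (metis (no_types, lifting) add_diff_cancel_left' diff_add_cancel diff_diff_eq2 minus_diff_eq smult_minus_right)
  have r1: "rc p (LL (monom 1 p * h)) (LL ((ff p + monom 1 1) * h))"
    using pc1 by (intro pc_LL pc_mult pc_refl)
  have e1: "LL ((ff p + monom 1 1) * h) = LL (pcompose h [:int p, 1:]) + LL (monom 1 1 * h)"
    by (simp add: distrib_right LL_add LL_ff)
  have "pc p [:int p, 1:] [:0, 1:]"
    unfolding pc_def by (rule exI[of _ "[:1:]"]) simp
  then have "pc p (pcompose h [:int p, 1:]) h"
    using pc_pcompose[of p "[:int p, 1:]" "[:0, 1:]" h] by simp
  then have r2: "rc p (LL (pcompose h [:int p, 1:]) + LL (monom 1 1 * h)) (LL h + LL (monom 1 1 * h))"
    by (intro rc_add pc_LL rc_refl)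
  have "[:1, 1:] = 1 + (monom 1 1 :: int poly)" by (simp add: monom_Suc monom_0 one_pCons)
  then have e2: "LL ([:1, 1:] * h) = LL h + LL (monom 1 1 * h)"
    by (simp add: distrib_right LL_add)
  show "rc p (LL (monom 1 p * h)) (LL ([:1, 1:] * h))"
    using r1 r2 unfolding e1 e2 by (rule rc_trans)
qed

lemma KE_pow:
  assumes "prime p"
  shows "KE p (monom 1 (p ^ k)) [:int k, 1:]"
proof (induction k)
  case 0 then show ?case by (simp add: monom_Suc monom_0 KE_refl)
next
  case (Suc k)
  have e: "monom 1 (p ^ Suc k) = (monom 1 p :: int poly) ^ (p ^ k)"
    by (simp add: monom_power)
  have k1: "KE p ((monom 1 p) ^ (p ^ k)) ([:1, 1:] ^ (p ^ k))"
    using touchard[OF assms] by (rule KE_power)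
  have "pc p ((monom 1 1 + 1) ^ (p ^ k)) ((monom 1 1) ^ (p ^ k) + 1 ^ (p ^ k))"
    using assms by (rule frob_iter)
  moreover have "[:1, 1:] = (monom 1 1 + 1 :: int poly)" by (simp add: monom_Suc monom_0 one_pCons)
  ultimately have k2: "KE p ([:1, 1:] ^ (p ^ k)) (monom 1 (p ^ k) + 1)"
    by (simp add: monom_power KE_of_pc)
  have k3: "KE p (monom 1 (p ^ k) + 1) ([:int k, 1:] + 1)"
    using Suc KE_refl by (rule KE_add)
  have "[:int k, 1:] + 1 = [:int (Suc k), 1:]" by (simp add: one_pCons)
  then show ?case unfolding e using KE_trans[OF k1 KE_trans[OF k2 k3]] by simp
qed

lemma KE_lin:
  assumes "prime p"
  shows "KE p ([:- int j, 1:] ^ (p ^ k)) [:int k - int j, 1:]"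
proof -
  have "[:- int j, 1:] = monom 1 1 + [:- int j:]" by (simp add: monom_Suc monom_0)
  then have "pc p ([:- int j, 1:] ^ (p ^ k)) (monom 1 1 ^ (p ^ k) + [:- int j:] ^ (p ^ k))"
    using frob_iter[OF assms] by simp
  moreover have "pc p (monom 1 1 ^ (p ^ k) + [:- int j:] ^ (p ^ k)) (monom 1 (p ^ k) + [:- int j:])"
    unfolding monom_power poly_const_pow power_one mult_1
    by (rule pc_add[OF pc_refl pc_const[OF fermat_iter[OF assms]]])
  ultimately have "KE p ([:- int j, 1:] ^ (p ^ k)) (monom 1 (p ^ k) + [:- int j:])"
    by (intro KE_of_pc) (rule pc_trans)
  moreover have "KE p (monom 1 (p ^ k) + [:- int j:]) ([:int k, 1:] + [:- int j:])"
    using KE_pow[OF assms] KE_refl by (rule KE_add)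
  ultimately have "KE p ([:- int j, 1:] ^ (p ^ k)) ([:int k, 1:] + [:- int j:])" by (rule KE_trans)
  then show ?thesis by simp
qed


lemma pcompose_pow: "pcompose (f ^ n) q = (pcompose f q) ^ n"
  by (induction n) (simp_all add: pcompose_mult pcompose_1)

lemma sbell_LL: "sbell n r = LL ([:r, 1:] ^ n)"
  by (simp add: sbell_sum LL_lin_power)

lemma bell_LL: "bell n = LL ([:0, 1:] ^ n)"
proof -
  have "[:0, 1:] ^ n = (monom 1 n :: int poly)" by (simp add: monom_altdef)
  then show ?thesis by (simp add: LL_monom)
qed

theorem corollary5:
  fixes p :: nat and r :: int and n :: nat
  assumes "prime p"
    and "n \<ge> (\<Sum>k = 1..nat ((- r) mod int p). p ^ k)"
  shows "\<exists>m::int. sbell n r - bell (n - (\<Sum>k = 1..nat ((- r) mod int p). p ^ k)) = of_int (int p * m)"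
proof -
  define j where "j = nat ((- r) mod int p)"
  define K where "K = (\<Sum>k = 1..j. p ^ k)"
  define N where "N = n - K"
  have p0: "p > 0" using assms(1) prime_gt_0_nat by blast
  have nK: "n = K + N" using assms(2) unfolding N_def K_def j_def by simp
  have jint: "int j = (- r) mod int p" unfolding j_def using p0 by simp
  have dvd: "int p dvd (r + int j)"
  proof -
    have "(r + (- r) mod int p) mod int p = (r + - r) mod int p" by (rule mod_add_right_eq)
    then have "(r + int j) mod int p = 0" unfolding jint by simp
    then show ?thesis by (simp add: mod_eq_0_iff_dvd)
  qed
  then obtain m where m: "r + int j = int p * m" by (auto elim: dvdE)
  have pc1: "pc p [:r, 1:] [:- int j, 1:]"
    unfolding pc_def by (rule exI[of _ "[:m:]"]) (simp add: m[symmetric])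
  have e1: "[:- int j, 1:] ^ K = (\<Prod>k\<in>{1..j}. [:- int j, 1:] ^ (p ^ k))"
    unfolding K_def by (rule power_sum)
  have k: "KE p (\<Prod>k\<in>{1..j}. [:- int j, 1:] ^ (p ^ k)) (\<Prod>k\<in>{1..j}. [:int k - int j, 1:])"
    by (intro KE_prod KE_lin assms(1))
  have e2: "(\<Prod>k\<in>{1..j}. [:int k - int j, 1:]) = ff j"
    unfolding ff_def
    apply (rule prod.reindex_bij_witness[of _ "\<lambda>i. j - i" "\<lambda>k. j - k"])
        apply auto[4]
    apply (simp add: of_nat_diff)
    done
  have ke1: "KE p ([:- int j, 1:] ^ K) (ff j)" using k unfolding e1 e2 .
  have ke2: "KE p ([:r, 1:] ^ K) (ff j)"
    using KE_of_pc[OF pc_power[OF pc1]] ke1 by (rule KE_trans)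
  have "sbell n r = LL ([:r, 1:] ^ K * [:r, 1:] ^ N)" unfolding sbell_LL nK by (simp add: power_add)
  moreover have "rc p (LL ([:r, 1:] ^ K * [:r, 1:] ^ N)) (LL (ff j * [:r, 1:] ^ N))"
    using ke2 unfolding KE_def by blast
  moreover have "LL (ff j * [:r, 1:] ^ N) = LL ([:r + int j, 1:] ^ N)"
    by (simp add: LL_ff pcompose_pow pcompose_pCons)
  moreover have "rc p (LL ([:r + int j, 1:] ^ N)) (LL ([:0, 1:] ^ N))"
  proof (intro pc_LL pc_power)
    show "pc p [:r + int j, 1:] [:0, 1:]"
      unfolding pc_def by (rule exI[of _ "[:m:]"]) (simp add: m)
  qed
  ultimately have "rc p (sbell n r) (bell N)" unfolding bell_LL by (metis rc_trans)
  then show ?thesis unfolding rc_def N_def K_def j_def .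
qed

end
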